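(* An even nonnegative integer $n$ satisfies $v(n)=2$ if and only if $n\in\{18,22,24,28\}$.
   Context: A hyperbinary expansion of a nonnegative integer $n$ is a word $x_0\cdots x_k$ over $\{0,1,2\}$ with $x_0\ne0$ and $\sum_i x_i2^{k-i}=n$. The empty word is the unique hyperbinary expansion of $0$. Write $\mathcal H(n)$ for the set of such expansions and $b(n)=|\mathcal H(n)|$. $A(n)$ is the directed graph on $\mathcal H(n)$ with an arc from $\mathbf x02\mathbf y$ to $\mathbf x10\mathbf y$, from $2\mathbf y$ to $10\mathbf y$, and from $\mathbf x12\mathbf y$ to $\mathbf x20\mathbf y$, for arbitrary words $\mathbf x,\mathbf y$ whenever both endpoints lie in $\mathcal H(n)$. $A(n)$ is connected. $v(n)$ denotes the cyclomatic number of $A(n)$: (number of arcs) $-\,b(n)+1$. *)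

theory Defs
  imports Main
begin

text \<open>Words over {0,1,2} are lists of naturals; the value of x_0...x_k is sum x_i 2^(k-i).\<close>

definition hb_val :: "nat list \<Rightarrow> nat" where
  "hb_val xs = foldl (\<lambda>a d. 2 * a + d) 0 xs"

text \<open>Hyperbinary expansions of n (the empty word is the expansion of 0).\<close>
definition hyperbinary :: "nat \<Rightarrow> nat list set" where
  "hyperbinary n = {xs. set xs \<subseteq> {0,1,2} \<and> (xs \<noteq> [] \<longrightarrow> hd xs \<noteq> 0) \<and> hb_val xs = n}"

definition b :: "nat \<Rightarrow> nat" where
  "b n = card (hyperbinary n)"

definition arcs :: "nat \<Rightarrow> (nat list \<times> nat list) set" where
  "arcs n = {(u, w). u \<in> hyperbinary n \<and> w \<in> hyperbinary n \<and>
     ((\<exists>x y. u = x @ [0,2] @ y \<and> w = x @ [1,0] @ y) \<or>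
      (\<exists>y. u = 2 # y \<and> w = [1,0] @ y) \<or>
      (\<exists>x y. u = x @ [1,2] @ y \<and> w = x @ [2,0] @ y))}"

definition v :: "nat \<Rightarrow> int" where
  "v n = int (card (arcs n)) - int (b n) + 1"

end

theory Submission
  imports Defs
begin



lemma hb_val_snoc[simp]: "hb_val (xs@[d]) = 2 * hb_val xs + d"
  by (simp add: hb_val_def)
lemma hb_val_Nil[simp]: "hb_val [] = 0" by (simp add: hb_val_def)

lemma hb_val_single[simp]: "hb_val [d] = d" by (simp add: hb_val_def)

lemma hb_val0: "hb_val xs = 0 \<Longrightarrow> set xs \<subseteq> {0}"
  by (induction xs rule: rev_induct) auto

lemma H0: "hyperbinary 0 = {[]}"
proof -
  have "xs = []" if "xs \<in> hyperbinary 0" for xs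
  proof (rule ccontr)
    assume "xs \<noteq> []"
    then have "hd xs \<in> set xs" by simp
    moreover have "hb_val xs = 0" "hd xs \<noteq> 0" using that \<open>xs \<noteq> []\<close> by (auto simp: hyperbinary_def)
    ultimately show False using hb_val0[of xs] by auto
  qed
  then show ?thesis by (auto simp: hyperbinary_def)
qed

lemma hd_snoc: "hd (x @ [d]) = (if x = [] then d else hd x)" by (cases x) auto

lemma Hodd: "hyperbinary (2*m+1) = (\<lambda>x. x@[1]) ` hyperbinary m"
proof
  show "hyperbinary (2*m+1) \<subseteq> (\<lambda>x. x@[1]) ` hyperbinary m"
  proof
    fix w assume w: "w \<in> hyperbinary (2*m+1)"
    then have "w \<noteq> []" by (auto simp: hyperbinary_def)
    then obtain x d where wx: "w = x @ [d]" by (metis rev_exhaust)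
    with w have d: "d \<in> {0,1,2}" and v: "2 * hb_val x + d = 2*m+1" by (auto simp: hyperbinary_def)
    from d v have "d = 1" by auto presburger+
    with v have "hb_val x = m" by simp
    with w wx \<open>d=1\<close> have "x \<in> hyperbinary m" by (auto simp: hyperbinary_def hd_snoc split: if_splits)
    with wx \<open>d=1\<close> show "w \<in> (\<lambda>x. x@[1]) ` hyperbinary m" by auto
  qed
next
  show "(\<lambda>x. x@[1]) ` hyperbinary m \<subseteq> hyperbinary (2*m+1)"
    by (auto simp: hyperbinary_def hd_snoc split: if_splits)
qed

lemma Heven: "hyperbinary (2*m+2) = (\<lambda>x. x@[0]) ` hyperbinary (m+1) \<union> (\<lambda>x. x@[2]) ` hyperbinary m"
proof
  show "hyperbinary (2*m+2) \<subseteq> (\<lambda>x. x@[0]) ` hyperbinary (m+1) \<union> (\<lambda>x. x@[2]) ` hyperbinary m"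
  proof
    fix w assume w: "w \<in> hyperbinary (2*m+2)"
    then have "w \<noteq> []" by (auto simp: hyperbinary_def)
    then obtain x d where wx: "w = x @ [d]" by (metis rev_exhaust)
    with w have d: "d \<in> {0,1,2}" and v: "2 * hb_val x + d = 2*m+2" by (auto simp: hyperbinary_def)
    from d v have "d = 0 \<or> d = 2" by auto presburger
    then show "w \<in> (\<lambda>x. x@[0]) ` hyperbinary (m+1) \<union> (\<lambda>x. x@[2]) ` hyperbinary m"
    proof
      assume "d = 0"
      with v have "hb_val x = m+1" by simp
      then have "x \<noteq> []" by auto
      with w wx \<open>hb_val x = m+1\<close> have "x \<in> hyperbinary (m+1)" by (auto simp: hyperbinary_def hd_snoc)
      with wx \<open>d=0\<close> show ?thesis by auto
    next
      assume "d = 2"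
      with v have "hb_val x = m" by simp
      with w wx have "x \<in> hyperbinary m" by (auto simp: hyperbinary_def hd_snoc split: if_splits)
      with wx \<open>d=2\<close> show ?thesis by auto
    qed
  qed
next
  have "x \<noteq> []" if "x \<in> hyperbinary (m+1)" for x using that by (auto simp: hyperbinary_def)
  then show "(\<lambda>x. x@[0]) ` hyperbinary (m+1) \<union> (\<lambda>x. x@[2]) ` hyperbinary m \<subseteq> hyperbinary (2*m+2)"
    by (auto simp: hyperbinary_def hd_snoc split: if_splits)
qed

lemma finH: "finite (hyperbinary n)"
proof (induction n rule: less_induct)
  case (less n)
  show ?case
  proof (cases "n = 0")
    case True then show ?thesis by (simp add: H0)
  next
    case False
    then have "\<exists>m. n = 2*m+1 \<or> n = 2*m+2" by presburger
    then obtain m where "n = 2*m+1 \<or> n = 2*m+2" by blast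
    then show ?thesis
    proof
      assume n: "n = 2*m+1" show ?thesis using less[of m] n by (subst n, subst Hodd) auto
    next
      assume n: "n = 2*m+2" show ?thesis using less[of m] less[of "m+1"] n by (subst n, subst Heven) auto
    qed
  qed
qed




definition R :: "nat list \<Rightarrow> nat list \<Rightarrow> bool" where
 "R u w = ((\<exists>x y. u = x @ [0,2] @ y \<and> w = x @ [1,0] @ y) \<or>
      (\<exists>y. u = 2 # y \<and> w = [1,0] @ y) \<or>
      (\<exists>x y. u = x @ [1,2] @ y \<and> w = x @ [2,0] @ y))"

definition S :: "nat list \<Rightarrow> nat list \<Rightarrow> bool" where
 "S u w = ((u = [] \<and> w = [1]) \<or> (\<exists>x. u = x@[0] \<and> w = x@[1]) \<or> (\<exists>x. u=x@[1] \<and> w=x@[2]))"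

lemma R_rev: "R u w \<longleftrightarrow> ((\<exists>x y. rev u = y @ 2 # 0 # x \<and> rev w = y @ 0 # 1 # x) \<or>
      (\<exists>y. rev u = y @ [2] \<and> rev w = y @ [0,1]) \<or>
      (\<exists>x y. rev u = y @ 2 # 1 # x \<and> rev w = y @ 0 # 2 # x))"
  unfolding R_def
  apply (rule iffI)
   apply (elim disjE exE)
     apply (rule disjI1, rule_tac x="rev x" in exI, rule_tac x="rev y" in exI, simp)
    apply (rule disjI2, rule disjI1, rule_tac x="rev y" in exI, simp)
   apply (rule disjI2, rule disjI2, rule_tac x="rev x" in exI, rule_tac x="rev y" in exI, simp)
  apply (elim disjE exE)
    apply (rule disjI1, rule_tac x="rev x" in exI, rule_tac x="rev y" in exI)
    apply (metis append.assoc append_Cons append_Nil rev.simps rev_append rev_rev_ident)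
   apply (rule disjI2, rule disjI1, rule_tac x="rev y" in exI)
   apply (metis append_Cons append_Nil rev.simps rev_append rev_rev_ident)
  apply (rule disjI2, rule disjI2, rule_tac x="rev x" in exI, rule_tac x="rev y" in exI)
  apply (metis append.assoc append_Cons append_Nil rev.simps rev_append rev_rev_ident)
  done

lemma S_rev: "S u w \<longleftrightarrow> ((rev u = [] \<and> rev w = [1]) \<or> (\<exists>x. rev u = 0#x \<and> rev w = 1#x) \<or> (\<exists>x. rev u = 1#x \<and> rev w = 2#x))"
  unfolding S_def
  apply (rule iffI)
   apply (elim disjE exE; simp)
  apply (elim disjE exE)
    apply simp
   apply (rule disjI2, rule disjI1, rule_tac x="rev x" in exI, metis rev_rev_ident rev.simps)
  apply (rule disjI2, rule disjI2, rule_tac x="rev x" in exI, metis rev_rev_ident rev.simps)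
  done

lemma aux1: "(\<exists>x y. a#U = y @ p # q # x \<and> c#W = y @ r # s # x) \<longleftrightarrow>
   (a = c \<and> (\<exists>x y. U = y @ p # q # x \<and> W = y @ r # s # x)) \<or> (a = p \<and> c = r \<and> (\<exists>x. U = q # x \<and> W = s # x))"
  apply (rule iffI)
   apply (elim exE conjE)
   apply (case_tac y)
    apply force
   apply force
  apply (elim disjE exE conjE)
   apply (rule_tac x=x in exI, rule_tac x="a#y" in exI, simp)
  apply (rule_tac x=x in exI, rule_tac x="[]" in exI, simp)
  done

lemma aux2: "(\<exists>y. a#U = y @ [2] \<and> c#W = y @ [0,1]) \<longleftrightarrow>
   (a = c \<and> (\<exists>y. U = y @ [2] \<and> W = y @ [0,1])) \<or> (a = 2 \<and> c = 0 \<and> U = [] \<and> W = [1])"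
  apply (rule iffI)
   apply (elim exE conjE)
   apply (case_tac y)
    apply force
   apply force
  apply (elim disjE exE conjE)
   apply (rule_tac x="a#y" in exI, simp)
  apply (rule_tac x="[]" in exI, simp)
  done

lemma R_snoc: "R (u@[a]) (w@[c]) \<longleftrightarrow> (a = c \<and> R u w) \<or> (a = 2 \<and> c = 0 \<and> S u w)"
  unfolding R_rev S_rev
  apply (simp only: rev_append rev.simps append_Cons append_Nil)
  unfolding aux1 aux2
  by blast




lemma arcs_R: "arcs n = {(u,w). u \<in> hyperbinary n \<and> w \<in> hyperbinary n \<and> R u w}"
  by (simp add: arcs_def R_def)

lemma b0: "b 0 = 1" by (simp add: b_def H0)

lemma b_odd: "b (2*m+1) = b m"
  unfolding b_def Hodd by (rule card_image) (simp add: inj_on_def)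

lemma b_even: "b (2*m+2) = b (m+1) + b m"
proof -
  have "card ((\<lambda>x. x@[0]) ` hyperbinary (m+1) \<union> (\<lambda>x. x@[2]) ` hyperbinary m)
     = card ((\<lambda>x. x@[0]) ` hyperbinary (m+1)) + card ((\<lambda>x. x@[2]) ` hyperbinary m)"
    by (rule card_Un_disjoint) (auto simp: finH)
  also have "\<dots> = b (m+1) + b m" unfolding b_def
    by (subst card_image, simp add: inj_on_def)+ simp
  finally show ?thesis unfolding b_def Heven .
qed

lemma arcs_odd: "arcs (2*m+1) = (\<lambda>(u,w). (u@[1], w@[1])) ` arcs m"
  unfolding arcs_R Hodd by (auto simp: R_snoc)

lemma card_arcs_odd: "card (arcs (2*m+1)) = card (arcs m)"
  unfolding arcs_odd by (rule card_image) (auto simp: inj_on_def)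

definition inc :: "nat list \<Rightarrow> nat list" where
  "inc u = (if u = [] then [1] else butlast u @ [last u + 1])"

definition Cs :: "nat \<Rightarrow> nat list set" where
  "Cs m = {u \<in> hyperbinary m. u = [] \<or> last u \<noteq> 2}"

lemma S_inc: "u \<in> hyperbinary m \<Longrightarrow> S u w \<longleftrightarrow> u \<in> Cs m \<and> w = inc u"
proof -
  assume u: "u \<in> hyperbinary m"
  have dig: "last u \<in> {0,1,2}" if "u \<noteq> []"
  proof -
    have "last u \<in> set u" using that by simp
    moreover have "set u \<subseteq> {0,1,2}" using u by (simp add: hyperbinary_def)
    ultimately show ?thesis by blast
  qed
  show ?thesis
  proof (cases u rule: rev_cases)
    case Nil then show ?thesis using u by (auto simp: S_def Cs_def inc_def)
  next
    case (snoc x d)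
    then show ?thesis using u dig by (auto simp: S_def Cs_def inc_def)
  qed
qed

lemma inc_H: "u \<in> Cs m \<Longrightarrow> inc u \<in> hyperbinary (m+1)"
proof (cases u rule: rev_cases)
  case Nil
  assume "u \<in> Cs m" then show ?thesis using Nil by (auto simp: Cs_def inc_def hyperbinary_def)
next
  case (snoc x d)
  assume "u \<in> Cs m"
  then show ?thesis using snoc last_in_set[of u] by (auto simp: Cs_def inc_def hyperbinary_def hd_snoc split: if_splits)
qed

lemma R2: "R [2] [1,0]" by (simp add: R_def)
lemma inc_Nil[simp]: "inc [] = [1]" by (simp add: inc_def)

lemma arcs_even: "arcs (2*m+2) = (\<lambda>(u,w). (u@[0], w@[0])) ` arcs (m+1) \<union> (\<lambda>(u,w). (u@[2], w@[2])) ` arcs m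
   \<union> (\<lambda>u. (u@[2], inc u @ [0])) ` Cs m"
  (is "?L = ?A \<union> ?B \<union> ?C")
proof
  show "?L \<subseteq> ?A \<union> ?B \<union> ?C"
  proof
    fix p assume p: "p \<in> ?L"
    then obtain u' w' where pe: "p = (u', w')" "u' \<in> hyperbinary (2*m+2)" "w' \<in> hyperbinary (2*m+2)" "R u' w'"
      unfolding arcs_R by auto
    then show "p \<in> ?A \<union> ?B \<union> ?C" unfolding Heven arcs_R
      using S_inc inc_H by (auto simp: R_snoc)
  qed
next
  have "?C \<subseteq> ?L"
  proof
    fix p assume "p \<in> ?C"
    then obtain u where u: "u \<in> Cs m" "p = (u@[2], inc u @ [0])" by auto
    have uH: "u \<in> hyperbinary m" using u by (simp add: Cs_def)
    have iH: "inc u \<in> hyperbinary (m+1)" using inc_H u by simp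
    have "R (u@[2]) (inc u @ [0])" using S_inc[OF uH] u by (simp add: R_snoc)
    moreover have "u@[2] \<in> hyperbinary (2*m+2)" "inc u @ [0] \<in> hyperbinary (2*m+2)"
      unfolding Heven using uH iH by auto
    ultimately show "p \<in> ?L" unfolding arcs_R using u by simp
  qed
  moreover have "?A \<union> ?B \<subseteq> ?L" unfolding Heven arcs_R
    by (auto simp: R_snoc)
  ultimately show "?A \<union> ?B \<union> ?C \<subseteq> ?L" by blast
qed

lemma finArcs: "finite (arcs n)"
  by (rule finite_subset[of _ "hyperbinary n \<times> hyperbinary n"]) (auto simp: arcs_R finH)

lemma finCs: "finite (Cs n)" by (rule finite_subset[of _ "hyperbinary n"]) (auto simp: Cs_def finH)

lemma card_arcs_even: "card (arcs (2*m+2)) = card (arcs (m+1)) + card (arcs m) + card (Cs m)"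
proof -
  let ?A = "(\<lambda>(u,w). (u@[0], w@[0])) ` arcs (m+1)"
  let ?B = "(\<lambda>(u,w). (u@[2], w@[2])) ` arcs m"
  let ?C = "(\<lambda>u. (u@[2], inc u @ [0])) ` Cs m"
  have cA: "card ?A = card (arcs (m+1))" by (rule card_image) (auto simp: inj_on_def)
  have cB: "card ?B = card (arcs m)" by (rule card_image) (auto simp: inj_on_def)
  have cC: "card ?C = card (Cs m)" by (rule card_image) (auto simp: inj_on_def)
  have "card (?A \<union> ?B \<union> ?C) = card (?A \<union> ?B) + card ?C"
    by (rule card_Un_disjoint) (auto simp: finArcs finCs)
  also have "card (?A \<union> ?B) = card ?A + card ?B"
    by (rule card_Un_disjoint) (auto simp: finArcs)
  finally show ?thesis unfolding arcs_even using cA cB cC by simp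
qed

lemma Cs_odd: "Cs (2*m+1) = hyperbinary (2*m+1)"
proof -
  have "u = [] \<or> last u \<noteq> 2" if "u \<in> hyperbinary (2*m+1)" for u
    using that unfolding Hodd by force
  then show ?thesis unfolding Cs_def by blast
qed

lemma Cs_0: "Cs 0 = {[]}" unfolding Cs_def H0 by auto

lemma Cs_even: "Cs (2*k+2) = (\<lambda>x. x@[0]) ` hyperbinary (k+1)"
proof
  show "Cs (2*k+2) \<subseteq> (\<lambda>x. x@[0]) ` hyperbinary (k+1)"
  proof
    fix u assume "u \<in> Cs (2*k+2)"
    then have u: "u \<in> hyperbinary (2*k+2)" "u = [] \<or> last u \<noteq> 2" unfolding Cs_def by auto
    from u(1) have "u \<in> (\<lambda>x. x@[0]) ` hyperbinary (k+1) \<or> u \<in> (\<lambda>x. x@[2]) ` hyperbinary k"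
      unfolding Heven by blast
    then show "u \<in> (\<lambda>x. x@[0]) ` hyperbinary (k+1)" using u(2) by force
  qed
next
  show "(\<lambda>x. x@[0]) ` hyperbinary (k+1) \<subseteq> Cs (2*k+2)"
    unfolding Cs_def Heven by force
qed

lemma card_Cs_even: "card (Cs (2*j)) = b j"
proof (cases j)
  case 0 then show ?thesis by (simp add: Cs_0 b0)
next
  case (Suc k)
  have "card (Cs (2*k+2)) = b (k+1)" unfolding Cs_even b_def
    by (rule card_image) (simp add: inj_on_def)
  then show ?thesis using Suc by simp
qed

lemma card_Cs_odd: "card (Cs (2*j+1)) = b j"
  using b_odd[of j] unfolding Cs_odd b_def by simp

lemma v0: "v 0 = 0"
proof -
  have "arcs 0 = {}" unfolding arcs_R H0 by (auto simp: R_def)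
  then show ?thesis by (simp add: v_def b0)
qed

lemma v_odd: "v (2*m+1) = v m"
  unfolding v_def b_odd card_arcs_odd ..

lemma v_even: "v (2*m+2) = v (m+1) + v m + int (card (Cs m)) - 1"
  unfolding v_def b_even card_arcs_even by simp

lemma VR1: "v (4*j+2) = v j + v (2*j) + int (b j) - 1"
  using v_even[of "2*j"] v_odd[of j] card_Cs_even[of j] by (simp add: mult.assoc)

lemma VR2: "v (4*j+4) = v (2*j+2) + v j + int (b j) - 1"
proof -
  have e: "4*j+4 = 2*(2*j+1)+2" "2*j+1+1 = 2*j+2" by simp_all
  show ?thesis unfolding e(1) v_even e(2) v_odd card_Cs_odd by simp
qed




lemma nat_cases4: fixes n :: nat obtains "n = 0" | m where "n = 2*m+1" | j where "n = 4*j+2" | j where "n = 4*j+4"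
proof -
  have "n = 0 \<or> (\<exists>m. n = 2*m+1) \<or> (\<exists>j. n = 4*j+2) \<or> (\<exists>j. n = 4*j+4)" by presburger
  then show ?thesis using that by blast
qed

lemma b_pos: "b n \<ge> 1"
proof (induction n rule: less_induct)
  case (less n)
  show ?case
  proof (cases "n = 0")
    case True then show ?thesis by (simp add: b0)
  next
    case False
    then have "\<exists>m. n = 2*m+1 \<or> n = 2*m+2" by presburger
    then obtain m where "n = 2*m+1 \<or> n = 2*m+2" by blast
    then show ?thesis
    proof
      assume n: "n = 2*m+1" show ?thesis using less[of m] n b_odd[of m] by simp
    next
      assume n: "n = 2*m+2" show ?thesis using less[of m] n b_even[of m] by simp
    qed
  qed
qed

lemma v_nonneg: "v n \<ge> 0"
proof (induction n rule: less_induct)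
  case (less n)
  show ?case
  proof (cases n rule: nat_cases4)
    case 1 then show ?thesis by (simp add: v0)
  next
    case (2 m) then show ?thesis using less[of m] v_odd[of m] by simp
  next
    case (3 j) then show ?thesis using less[of j] less[of "2*j"] VR1[of j] b_pos[of j] by simp
  next
    case (4 j) then show ?thesis using less[of j] less[of "2*j+2"] VR2[of j] b_pos[of j] by simp
  qed
qed

lemma f3: "y \<ge> 1 \<Longrightarrow> b y + b (y+1) \<ge> 3"
proof -
  assume y: "y \<ge> 1"
  have "\<exists>k. (y = 2*k+2) \<or> (y = 2*k+1)" using y by presburger
  then obtain k where "y = 2*k+2 \<or> y = 2*k+1" by blast
  then show ?thesis
  proof
    assume "y = 2*k+2"
    then have "b y + b (y+1) = b (k+1) + b k + b (k+1)"
      using b_even[of k] b_odd[of "k+1"] by (simp add: algebra_simps)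
    then show ?thesis using b_pos[of k] b_pos[of "k+1"] by simp
  next
    assume "y = 2*k+1"
    then have "b y + b (y+1) = b k + (b (k+1) + b k)"
      using b_even[of k] b_odd[of k] by simp
    then show ?thesis using b_pos[of k] b_pos[of "k+1"] by simp
  qed
qed

lemma f4: "y \<ge> 3 \<Longrightarrow> b y + b (y+1) \<ge> 4"
proof -
  assume y: "y \<ge> 3"
  have "\<exists>k. (y = 2*k+2 \<and> k \<ge> 1) \<or> (y = 2*k+1 \<and> k \<ge> 1)" using y by presburger
  then obtain k where "(y = 2*k+2 \<and> k \<ge> 1) \<or> (y = 2*k+1 \<and> k \<ge> 1)" by blast
  then show ?thesis
  proof
    assume a: "y = 2*k+2 \<and> k \<ge> 1"
    then have "b y + b (y+1) = b (k+1) + (b k + b (k+1))"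
      using b_even[of k] b_odd[of "k+1"] by (simp add: algebra_simps)
    then show ?thesis using b_pos[of "k+1"] f3[of k] a by simp
  next
    assume a: "y = 2*k+1 \<and> k \<ge> 1"
    then have "b y + b (y+1) = b k + (b k + b (k+1))"
      using b_even[of k] b_odd[of k] by simp
    then show ?thesis using b_pos[of k] f3[of k] a by simp
  qed
qed

lemma Bform: "b x \<le> 3 \<Longrightarrow> \<exists>t d. d \<in> {1,3,5,7} \<and> x+1 = 2^t*d"
proof (induction x rule: less_induct)
  case (less x)
  show ?case
  proof (cases "x = 0")
    case True then show ?thesis by (rule_tac x=0 in exI, rule_tac x=1 in exI) simp
  next
    case False
    then have "\<exists>m. x = 2*m+1 \<or> x = 2*m+2" by presburger
    then obtain m where "x = 2*m+1 \<or> x = 2*m+2" by blast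
    then show ?thesis
    proof
      assume x: "x = 2*m+1"
      then have "b m \<le> 3" using less.prems b_odd[of m] by simp
      then obtain t d where "d \<in> {1,3,5,7}" "m+1 = 2^t*d" using less.IH[of m] x by auto
      then show ?thesis using x by (rule_tac x="t+1" in exI, rule_tac x=d in exI) simp
    next
      assume x: "x = 2*m+2"
      then have "b m + b (m+1) \<le> 3" using less.prems b_even[of m] by simp
      then have "m \<le> 2" using f4[of m] by (cases "m \<ge> 3") auto
      then have "x+1 \<in> {3,5,7}" using x by auto
      then show ?thesis by (rule_tac x=0 in exI, rule_tac x="x+1" in exI) auto
    qed
  qed
qed

lemma strip_v: "v (2^r*(x+1)-1) = v x"
proof (induction r)
  case 0 then show ?case by simp
next
  case (Suc r)
  have p: "2^r*(x+1) \<ge> (1::nat)" by (simp add: Suc_le_eq)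
  have "2^Suc r*(x+1)-1 = 2*(2^r*(x+1)-1)+1" using p by (simp add: algebra_simps)
  then show ?case using Suc v_odd by simp
qed

lemma strip_b: "b (2^r*(x+1)-1) = b x"
proof (induction r)
  case 0 then show ?case by simp
next
  case (Suc r)
  have p: "2^r*(x+1) \<ge> (1::nat)" by (simp add: Suc_le_eq)
  have "2^Suc r*(x+1)-1 = 2*(2^r*(x+1)-1)+1" using p by (simp add: algebra_simps)
  then show ?case using Suc b_odd by simp
qed

lemma Form: "even n \<Longrightarrow> v n \<le> 2 \<Longrightarrow> n = 0 \<or> (\<exists>s d. s \<ge> 2 \<and> d \<in> {1,3,5,7} \<and> (n = 2^s*d \<or> n+2 = 2^s*d))"
proof (cases n rule: nat_cases4)
  case (3 j)
  assume "v n \<le> 2"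
  then have "b j \<le> 3" using 3 VR1[of j] v_nonneg[of j] v_nonneg[of "2*j"] by simp
  then obtain t d where td: "d \<in> {1,3,5,7}" "j+1 = 2^t*d" using Bform by blast
  have "n+2 = 2^(t+2)*d" using 3 td(2) by (simp add: power_add algebra_simps)
  then show ?thesis using td by (rule_tac disjI2, rule_tac x="t+2" in exI, rule_tac x=d in exI) simp
next
  case (4 j)
  assume "v n \<le> 2"
  then have "b j \<le> 3" using 4 VR2[of j] v_nonneg[of j] v_nonneg[of "2*j+2"] by simp
  then obtain t d where td: "d \<in> {1,3,5,7}" "j+1 = 2^t*d" using Bform by blast
  have "n = 2^(t+2)*d" using 4 td(2) by (simp add: power_add algebra_simps)
  then show ?thesis using td by (rule_tac disjI2, rule_tac x="t+2" in exI, rule_tac x=d in exI) simp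
qed auto

lemma step_a: "d \<ge> 1 \<Longrightarrow> v (2^(s+2)*d) = v (2^(s+1)*d) + v (d-1) + int (b (d-1)) - 1"
proof -
  assume d: "d \<ge> 1"
  define j where "j = 2^s*d - 1"
  have j1: "j + 1 = 2^s*d" using d unfolding j_def by simp
  have e1: "2^(s+2)*d = 4*j+4" using j1 by (simp add: algebra_simps)
  have e2: "2*j+2 = 2^(s+1)*d" using j1 by (simp add: algebra_simps)
  have e3: "j = 2^s*((d-1)+1)-1" using d unfolding j_def by simp
  show ?thesis unfolding e1 VR2 e2 using strip_v[of s "d-1"] strip_b[of s "d-1"] e3 by simp
qed

lemma step_b: "d \<ge> 1 \<Longrightarrow> v (2^(s+2)*d - 2) = v (2^(s+1)*d - 2) + v (d-1) + int (b (d-1)) - 1"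
proof -
  assume d: "d \<ge> 1"
  define j where "j = 2^s*d - 1"
  have j1: "j + 1 = 2^s*d" using d unfolding j_def by simp
  have e1: "2^(s+2)*d - 2 = 4*j+2" using j1 by (simp add: algebra_simps)
  have e2: "2*j = 2^(s+1)*d - 2" using j1 by (simp add: algebra_simps)
  have e3: "j = 2^s*((d-1)+1)-1" using d unfolding j_def by simp
  show ?thesis unfolding e1 VR1 e2[symmetric] using strip_v[of s "d-1"] strip_b[of s "d-1"] e3 by simp
qed

lemma closed_a: "d \<ge> 1 \<Longrightarrow> v (2^(s+1)*d) = v (2*d) + int s * (v (d-1) + int (b (d-1)) - 1)"
proof (induction s)
  case 0 then show ?case by simp
next
  case (Suc s) then show ?case using step_a[of d s] by (simp add: algebra_simps)
qed

lemma closed_b: "d \<ge> 1 \<Longrightarrow> v (2^(s+1)*d - 2) = v (2*d - 2) + int s * (v (d-1) + int (b (d-1)) - 1)"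
proof (induction s)
  case 0 then show ?case by simp
next
  case (Suc s) then show ?case using step_b[of d s] by (simp add: algebra_simps)
qed




lemma vals: "v 1 = 0" "v 2 = 0" "v 3 = 0" "v 4 = 0" "v 6 = 0" "v 8 = 0" "v 10 = 1" "v 12 = 1" "v 14 = 0"
  "b 1 = 1" "b 2 = 2" "b 3 = 1" "b 4 = 3" "b 6 = 3"
proof -
  show v1: "v 1 = 0" using v_odd[of 0] v0 by (simp add: eval_nat_numeral)
  show b1: "b 1 = 1" using b_odd[of 0] b0 by (simp add: eval_nat_numeral)
  show v2: "v 2 = 0" using VR1[of 0] v0 b0 by (simp add: eval_nat_numeral)
  show v3: "v 3 = 0" using v_odd[of 1] v1 by (simp add: eval_nat_numeral)
  show b3: "b 3 = 1" using b_odd[of 1] b1 by (simp add: eval_nat_numeral)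
  show b2: "b 2 = 2" using b_even[of 0] b0 b1 by (simp add: eval_nat_numeral)
  show v4: "v 4 = 0" using VR2[of 0] v0 v2 b0 by (simp add: eval_nat_numeral)
  show v6: "v 6 = 0" using VR1[of 1] v1 v2 b1 by (simp add: eval_nat_numeral)
  show v8: "v 8 = 0" using VR2[of 1] v1 v4 b1 by (simp add: eval_nat_numeral)
  show "v 10 = 1" using VR1[of 2] v2 v4 b2 by (simp add: eval_nat_numeral)
  show "v 12 = 1" using VR2[of 2] v2 v6 b2 by (simp add: eval_nat_numeral)
  show "v 14 = 0" using VR1[of 3] v3 v6 b3 by (simp add: eval_nat_numeral)
  show "b 4 = 3" using b_even[of 1] b1 b2 by (simp add: eval_nat_numeral)
  show "b 6 = 3" using b_even[of 2] b2 b3 by (simp add: eval_nat_numeral)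
qed

theorem mainTheorem4:
  fixes n :: nat
  assumes "even n"
  shows "v n = 2 \<longleftrightarrow> n \<in> {18, 22, 24, 28}"
proof
  assume vn: "v n = 2"
  then have "n = 0 \<or> (\<exists>s d. s \<ge> 2 \<and> d \<in> {1,3,5,7} \<and> (n = 2^s*d \<or> n+2 = 2^s*d))"
    using Form assms by simp
  moreover have "n \<noteq> 0"
  proof
    assume "n = 0" with vn v0 show False by simp
  qed
  ultimately obtain s d where sd: "s \<ge> 2" "d \<in> {1,3,5,7}" "n = 2^s*d \<or> n+2 = 2^s*d" by blast
  obtain s' where s': "s = s'+1" "s' \<ge> 1" using sd(1) by (metis add.commute le_add_diff_inverse one_le_numeral order_trans add_le_cancel_left le_add1 one_add_one)
  have d1: "d \<ge> 1" using sd(2) by auto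
  from sd(3) show "n \<in> {18, 22, 24, 28}"
  proof
    assume n: "n = 2^s*d"
    have "v n = v (2*d) + int s' * (v (d-1) + int (b (d-1)) - 1)" using closed_a[OF d1, of s'] n s' by simp
    then have eq: "2 = v (2*d) + int s' * (v (d-1) + int (b (d-1)) - 1)" using vn by simp
    from sd(2) show ?thesis
    proof (elim insertE emptyE)
      assume "d = 1" then show ?thesis using eq v0 b0 by (simp add: vals)
    next
      assume d: "d = 3" then have "s' = 2" using eq by (simp add: vals)
      then show ?thesis using n s' d by simp
    next
      assume "d = 5" then show ?thesis using eq by (simp add: vals) presburger
    next
      assume d: "d = 7" then have "s' = 1" using eq by (simp add: vals)
      then show ?thesis using n s' d by simp
    qed
  next
    assume n: "n+2 = 2^s*d"
    have "v n = v (2*d - 2) + int s' * (v (d-1) + int (b (d-1)) - 1)"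
      using closed_b[OF d1, of s'] n s' by (metis add_diff_cancel_right')
    then have eq: "2 = v (2*d - 2) + int s' * (v (d-1) + int (b (d-1)) - 1)" using vn by simp
    from sd(2) show ?thesis
    proof (elim insertE emptyE)
      assume "d = 1" then show ?thesis using eq v0 b0 by (simp add: vals)
    next
      assume d: "d = 3" then have "s' = 2" using eq by (simp add: vals)
      then show ?thesis using n s' d by simp
    next
      assume d: "d = 5" then have "s' = 1" using eq by (simp add: vals)
      then show ?thesis using n s' d by simp
    next
      assume "d = 7" then show ?thesis using eq by (simp add: vals) presburger
    qed
  qed
next
  assume "n \<in> {18, 22, 24, 28}"
  moreover have "v 18 = 2" using closed_b[of 5 1] by (simp add: vals)
  moreover have "v 22 = 2" using closed_b[of 3 2] by (simp add: vals)
  moreover have "v 24 = 2" using closed_a[of 3 2] by (simp add: vals)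
  moreover have "v 28 = 2" using closed_a[of 7 1] by (simp add: vals)
  ultimately show "v n = 2" by auto
qed


end
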